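(* $\frac{11n}{9}+o(n)\le\mathrm{sat}_\circlearrowright(n,M_2)\le 3n+o(n)$.
   Context: $\Omega_n=\{v_0,\dots,v_{n-1}\}$ with cyclic order $v_0<\dots<v_{n-1}<v_0$ (indices mod $n$). A $3$-cgh on $\Omega_n$ is a family of $3$-subsets of $\Omega_n$. For a $3$-cgh $F$, $H$ contains a copy of $F$ if there is an injection of the vertex set of $F$ into $\Omega_n$ preserving the cyclic order and mapping every edge of $F$ to an edge of $H$. $H$ is $F$-saturated if it contains no copy of $F$ but $H\cup\{e\}$ does for every $e\in\binom{\Omega_n}{3}\setminus H$; $\mathrm{sat}_\circlearrowright(n,F)$ is the minimum number of edges of an $F$-saturated $3$-cgh on $\Omega_n$. $M_2$ is the $3$-cgh on $\Omega_6$ with edges $\{v_0,v_1,v_3\}$ and $\{v_2,v_4,v_5\}$. *)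

theory Defs
  imports "HOL-Library.Landau_Symbols"
begin

text \<open>Vertices of Omega_n are 0..<n (v_i is i), cyclic order 0 < 1 < ... < n-1 < 0.
  A 3-cgh on Omega_n is a family of 3-subsets of {0..<n}.
  A pattern F on k vertices has vertex set {0..<k}.\<close>

definition triples :: "nat \<Rightarrow> nat set set" where
  "triples n = {e. e \<subseteq> {0..<n} \<and> card e = 3}"

definition cgh :: "nat \<Rightarrow> nat set set \<Rightarrow> bool" where
  "cgh n H \<longleftrightarrow> H \<subseteq> triples n"

definition cyc_order_pres :: "nat \<Rightarrow> nat \<Rightarrow> (nat \<Rightarrow> nat) \<Rightarrow> bool" where
  "cyc_order_pres n k \<phi> \<longleftrightarrow> (\<forall>i<k. \<phi> i < n) \<and>
     (\<exists>r<n. strict_mono_on {0..<k} (\<lambda>i. (\<phi> i + (n - r)) mod n))"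

definition contains_copy :: "nat \<Rightarrow> nat set set \<Rightarrow> nat \<Rightarrow> nat set set \<Rightarrow> bool" where
  "contains_copy n H k F \<longleftrightarrow>
     (\<exists>\<phi>. cyc_order_pres n k \<phi> \<and> (\<forall>e\<in>F. \<phi> ` e \<in> H))"

definition saturated :: "nat \<Rightarrow> nat \<Rightarrow> nat set set \<Rightarrow> nat set set \<Rightarrow> bool" where
  "saturated n k F H \<longleftrightarrow> cgh n H \<and> \<not> contains_copy n H k F \<and>
     (\<forall>e\<in>triples n - H. contains_copy n (insert e H) k F)"

definition sat_cyc :: "nat \<Rightarrow> nat \<Rightarrow> nat set set \<Rightarrow> nat" where
  "sat_cyc n k F = Min (card ` {H. saturated n k F H})"

definition M2 :: "nat set set" where
  "M2 = {{0,1,3},{2,4,5}}"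

end

theory Submission
  imports Defs
begin


lemma modn: "x < n \<Longrightarrow> k < n \<Longrightarrow> (x + k) mod n = (if x + k < n then x + k else x + k - n)"
  for x k n :: nat
  by (simp add: mod_if)

lemma sorted3: "(a::nat) < b \<Longrightarrow> b < c \<Longrightarrow> p < q \<Longrightarrow> q < s \<Longrightarrow> {a,b,c} = {p,q,s}
   \<Longrightarrow> a = p \<and> b = q \<and> c = s"
proof -
  assume h: "a < b" "b < c" "p < q" "q < s" "{a,b,c} = {p,q,s}"
  have "a \<in> {p,q,s}" "b \<in> {p,q,s}" "c \<in> {p,q,s}" "p \<in> {a,b,c}" "q \<in> {a,b,c}" "s \<in> {a,b,c}"
    using h(5) by blast+
  then show ?thesis using h(1-4) by auto
qed

definition rt :: "nat \<Rightarrow> nat \<Rightarrow> nat \<Rightarrow> nat" where "rt n r y = (y + r) mod n"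

lemma copy_iff: "contains_copy n H 6 M2 \<longleftrightarrow> (\<exists>r<n. \<exists>y0 y1 y2 y3 y4 y5. y0<y1 \<and> y1<y2 \<and> y2<y3 \<and> y3<y4 \<and> y4<y5 \<and> y5<n
   \<and> {rt n r y0, rt n r y1, rt n r y3} \<in> H \<and> {rt n r y2, rt n r y4, rt n r y5} \<in> H)"
proof
  assume "contains_copy n H 6 M2"
  then obtain \<phi> r where ph: "\<forall>i<6. \<phi> i < n" and r: "r < n"
    and sm: "strict_mono_on {0..<6} (\<lambda>i. (\<phi> i + (n - r)) mod n)" and ed: "\<forall>e\<in>M2. \<phi> ` e \<in> H"
    unfolding contains_copy_def cyc_order_pres_def by blast
  define y where "y i = (\<phi> i + (n - r)) mod n" for i
  have bk: "rt n r (y i) = \<phi> i" if "i < 6" for i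
  proof -
    have "rt n r (y i) = (\<phi> i + (n - r) + r) mod n" unfolding rt_def y_def by (simp add: mod_add_left_eq)
    also have "\<phi> i + (n - r) + r = \<phi> i + n" using r by simp
    finally show ?thesis using ph that by simp
  qed
  have inc: "y i < y j" if "i < j" "j < 6" for i j
    using sm that unfolding strict_mono_on_def y_def by auto
  have yn: "y 5 < n" unfolding y_def using r by simp
  have e1: "{\<phi> 0, \<phi> 1, \<phi> 3} \<in> H" and e2: "{\<phi> 2, \<phi> 4, \<phi> 5} \<in> H" using ed unfolding M2_def by auto
  show "\<exists>r<n. \<exists>y0 y1 y2 y3 y4 y5. y0<y1 \<and> y1<y2 \<and> y2<y3 \<and> y3<y4 \<and> y4<y5 \<and> y5<n
   \<and> {rt n r y0, rt n r y1, rt n r y3} \<in> H \<and> {rt n r y2, rt n r y4, rt n r y5} \<in> H"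
  proof -
    have "y 0 < y 1 \<and> y 1 < y 2 \<and> y 2 < y 3 \<and> y 3 < y 4 \<and> y 4 < y 5 \<and> y 5 < n
   \<and> {rt n r (y 0), rt n r (y 1), rt n r (y 3)} \<in> H \<and> {rt n r (y 2), rt n r (y 4), rt n r (y 5)} \<in> H"
      using inc[of 0 1] inc[of 1 2] inc[of 2 3] inc[of 3 4] inc[of 4 5] yn e1 e2 bk[of 0] bk[of 1] bk[of 2] bk[of 3] bk[of 4] bk[of 5]
      by simp
    then show ?thesis using r by blast
  qed
next
  assume "\<exists>r<n. \<exists>y0 y1 y2 y3 y4 y5. y0<y1 \<and> y1<y2 \<and> y2<y3 \<and> y3<y4 \<and> y4<y5 \<and> y5<n
   \<and> {rt n r y0, rt n r y1, rt n r y3} \<in> H \<and> {rt n r y2, rt n r y4, rt n r y5} \<in> H"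
  then obtain r y0 y1 y2 y3 y4 y5 where r: "r < n" and oo: "y0<y1" "y1<y2" "y2<y3" "y3<y4" "y4<y5" "y5<n"
    and e: "{rt n r y0, rt n r y1, rt n r y3} \<in> H" "{rt n r y2, rt n r y4, rt n r y5} \<in> H" by blast
  define y where "y i = (if i = 0 then y0 else if i = 1 then y1 else if i = 2 then y2 else if i = 3 then y3 else if i = 4 then y4 else y5)" for i :: nat
  define \<phi> where "\<phi> i = rt n r (y i)" for i
  have yn: "y i < n" for i using oo unfolding y_def by auto
  have fw: "(\<phi> i + (n - r)) mod n = y i" for i
  proof -
    have "(\<phi> i + (n - r)) mod n = (y i + r + (n - r)) mod n" unfolding \<phi>_def rt_def by (simp add: mod_add_left_eq)
    also have "y i + r + (n - r) = y i + n" using r by simp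
    finally show ?thesis using yn[of i] by simp
  qed
  have sm: "strict_mono_on {0..<6} (\<lambda>i. (\<phi> i + (n - r)) mod n)"
    unfolding strict_mono_on_def fw
  proof (intro allI impI, elim conjE)
    fix i j :: nat assume "i \<in> {0..<6}" "j \<in> {0..<6}" "i < j"
    then show "y i < y j" using oo unfolding y_def
      by (auto simp: less_Suc_eq numeral_eq_Suc)
  qed
  have "cyc_order_pres n 6 \<phi>" unfolding cyc_order_pres_def using sm r
    by (auto simp: \<phi>_def rt_def)
  moreover have "\<forall>e\<in>M2. \<phi> ` e \<in> H" using e unfolding M2_def \<phi>_def y_def by auto
  ultimately show "contains_copy n H 6 M2" unfolding contains_copy_def by blast
qed



definition G :: "nat \<Rightarrow> nat \<Rightarrow> nat \<Rightarrow> nat set" where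
  "G n k x = {x, (x+1) mod n, (x+k) mod n}"

definition Fam :: "nat \<Rightarrow> nat \<Rightarrow> nat set set" where
  "Fam n k = G n k ` {0..<n}"

lemma G_rot: "0 < n \<Longrightarrow> x < n \<Longrightarrow> (\<lambda>z. (z + s) mod n) ` G n k x = G n k ((x + s) mod n)"
proof -
  have e: "((x + j) mod n + s) mod n = ((x + s) mod n + j) mod n" for j
  proof -
    have "((x + j) mod n + s) mod n = (x + j + s) mod n" by (simp add: mod_add_left_eq)
    also have "\<dots> = (x + s + j) mod n" by (simp add: add_ac)
    also have "\<dots> = ((x + s) mod n + j) mod n" by (simp add: mod_add_left_eq)
    finally show ?thesis .
  qed
  have "(x + s) mod n = ((x + s) mod n) mod n" by simp
  then show ?thesis unfolding G_def using e[of 1] e[of k] by simp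
qed

lemma unrot:
  assumes "r < n" "a < n" "b < n" "c < n" "{rt n r a, rt n r b, rt n r c} \<in> Fam n k"
  shows "{a,b,c} \<in> Fam n k"
proof -
  obtain x where x: "x < n" "{rt n r a, rt n r b, rt n r c} = G n k x" using assms(5) unfolding Fam_def by auto
  have n0: "0 < n" using assms by simp
  have inv: "(rt n r z + (n - r)) mod n = z" if "z < n" for z
  proof -
    have "(rt n r z + (n - r)) mod n = (z + r + (n - r)) mod n" unfolding rt_def by (simp add: mod_add_left_eq)
    also have "z + r + (n - r) = z + n" using assms(1) by simp
    finally show ?thesis using that by simp
  qed
  have "(\<lambda>z. (z + (n - r)) mod n) ` {rt n r a, rt n r b, rt n r c} = {a,b,c}"
    using inv assms by simp
  then have "{a,b,c} = G n k ((x + (n - r)) mod n)" using x G_rot[OF n0 x(1)] by metis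
  then show ?thesis unfolding Fam_def using n0 by auto
qed

lemma linC: assumes "a < b" "b < c" "c < n"
  shows "{a,b,c} \<in> Fam n 2 \<longleftrightarrow> (b = a+1 \<and> c = a+2) \<or> (a = 0 \<and> b = 1 \<and> c = n-1) \<or> (a = 0 \<and> b = n-2 \<and> c = n-1)"
proof
  assume "{a,b,c} \<in> Fam n 2"
  then obtain x where x: "x < n" "{a,b,c} = {x, (x+1) mod n, (x+2) mod n}" unfolding Fam_def G_def by auto
  consider "x + 2 < n" | "x = n - 2" | "x = n - 1" using x(1) by linarith
  then show "(b = a+1 \<and> c = a+2) \<or> (a = 0 \<and> b = 1 \<and> c = n-1) \<or> (a = 0 \<and> b = n-2 \<and> c = n-1)"
  proof cases
    case 1
    then have "{a,b,c} = {x, x+1, x+2}" using x by simp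
    then show ?thesis using sorted3[of a b c x "x+1" "x+2"] assms by simp
  next
    case 2
    then have "n \<ge> 3" using assms by simp
    then have "{a,b,c} = {0, n-2, n-1}" using x 2 by (auto simp: mod_if)
    then show ?thesis using sorted3[of a b c 0 "n-2" "n-1"] assms \<open>n \<ge> 3\<close> by simp
  next
    case 3
    then have "n \<ge> 3" using assms by simp
    then have "{a,b,c} = {0, 1, n-1}" using x 3 by (auto simp: mod_if)
    then show ?thesis using sorted3[of a b c 0 1 "n-1"] assms \<open>n \<ge> 3\<close> by simp
  qed
next
  assume h: "(b = a+1 \<and> c = a+2) \<or> (a = 0 \<and> b = 1 \<and> c = n-1) \<or> (a = 0 \<and> b = n-2 \<and> c = n-1)"
  have n3: "n \<ge> 3" using assms by simp
  from h consider "b = a+1 \<and> c = a+2" | "a = 0 \<and> b = 1 \<and> c = n-1" | "a = 0 \<and> b = n-2 \<and> c = n-1" by blast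
  then show "{a,b,c} \<in> Fam n 2"
  proof cases
    case 1 then have "{a,b,c} = G n 2 a" using assms unfolding G_def by auto
    then show ?thesis unfolding Fam_def using assms by auto
  next
    case 2 then have "{a,b,c} = G n 2 (n-1)" using n3 unfolding G_def by (auto simp: mod_if)
    then show ?thesis unfolding Fam_def using n3 by auto
  next
    case 3 then have "{a,b,c} = G n 2 (n-2)" using n3 unfolding G_def by (auto simp: mod_if)
    then show ?thesis unfolding Fam_def using n3 by auto
  qed
qed

lemma linT: assumes "a < b" "b < c" "c < n" "n \<ge> 5"
  shows "{a,b,c} \<in> Fam n 3 \<longleftrightarrow> (b = a+1 \<and> c = a+3) \<or> (a = 0 \<and> b = 2 \<and> c = n-1)
     \<or> (a = 1 \<and> b = n-2 \<and> c = n-1) \<or> (a = 0 \<and> b = n-3 \<and> c = n-2)"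
proof
  assume "{a,b,c} \<in> Fam n 3"
  then obtain x where x: "x < n" "{a,b,c} = {x, (x+1) mod n, (x+3) mod n}" unfolding Fam_def G_def by auto
  consider "x + 3 < n" | "x = n - 3" | "x = n - 2" | "x = n - 1" using x(1) by linarith
  then show "(b = a+1 \<and> c = a+3) \<or> (a = 0 \<and> b = 2 \<and> c = n-1)
     \<or> (a = 1 \<and> b = n-2 \<and> c = n-1) \<or> (a = 0 \<and> b = n-3 \<and> c = n-2)"
  proof cases
    case 1
    then have "{a,b,c} = {x, x+1, x+3}" using x by simp
    then show ?thesis using sorted3[of a b c x "x+1" "x+3"] assms by simp
  next
    case 2
    then have "{a,b,c} = {0, n-3, n-2}" using x 2 assms(4) by (auto simp: mod_if)
    then show ?thesis using sorted3[of a b c 0 "n-3" "n-2"] assms by simp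
  next
    case 3
    then have "{a,b,c} = {1, n-2, n-1}" using x 3 assms(4) by (auto simp: mod_if)
    then show ?thesis using sorted3[of a b c 1 "n-2" "n-1"] assms by simp
  next
    case 4
    then have "{a,b,c} = {0, 2, n-1}" using x 4 assms(4) by (auto simp: mod_if)
    then show ?thesis using sorted3[of a b c 0 2 "n-1"] assms by simp
  qed
next
  assume h: "(b = a+1 \<and> c = a+3) \<or> (a = 0 \<and> b = 2 \<and> c = n-1)
     \<or> (a = 1 \<and> b = n-2 \<and> c = n-1) \<or> (a = 0 \<and> b = n-3 \<and> c = n-2)"
  have n3: "n \<ge> 5" using assms by simp
  from h consider "b = a+1 \<and> c = a+3" | "a = 0 \<and> b = 2 \<and> c = n-1" | "a = 1 \<and> b = n-2 \<and> c = n-1"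
     | "a = 0 \<and> b = n-3 \<and> c = n-2" by blast
  then show "{a,b,c} \<in> Fam n 3"
  proof cases
    case 1 then have "{a,b,c} = G n 3 a" using assms unfolding G_def by auto
    then show ?thesis unfolding Fam_def using assms by auto
  next
    case 2 then have "{a,b,c} = G n 3 (n-1)" using n3 unfolding G_def by (auto simp: mod_if)
    then show ?thesis unfolding Fam_def using n3 by auto
  next
    case 3 then have "{a,b,c} = G n 3 (n-2)" using n3 unfolding G_def by (auto simp: mod_if)
    then show ?thesis unfolding Fam_def using n3 by auto
  next
    case 4 then have "{a,b,c} = G n 3 (n-3)" using n3 unfolding G_def by (auto simp: mod_if)
    then show ?thesis unfolding Fam_def using n3 by auto
  qed
qed



lemma rt1: "q \<le> p \<Longrightarrow> p < n \<Longrightarrow> rt n q (p - q) = p" unfolding rt_def by simp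
lemma rt2: assumes "q < n" "p < n" shows "rt n q (p + n - q) = p"
proof -
  have "p + n - q + q = p + n" using assms by simp
  then show ?thesis unfolding rt_def using assms by simp
qed
lemma rt0: "p < n \<Longrightarrow> rt n p 0 = p" unfolding rt_def by simp

lemma pat0: "p0<p1 \<Longrightarrow> p1<p2 \<Longrightarrow> p2<p3 \<Longrightarrow> p3<p4 \<Longrightarrow> p4<p5 \<Longrightarrow> p5<n \<Longrightarrow>
  {p0,p1,p3} \<in> H \<Longrightarrow> {p2,p4,p5} \<in> H \<Longrightarrow> contains_copy n H 6 M2"
  unfolding copy_iff
  apply (rule exI[of _ p0], rule conjI, simp)
  apply (rule exI[of _ "p0-p0"], rule exI[of _ "p1-p0"], rule exI[of _ "p2-p0"], rule exI[of _ "p3-p0"],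
         rule exI[of _ "p4-p0"], rule exI[of _ "p5-p0"])
  apply (simp add: rt0 rt1 rt2)
  by arith

lemma pat1x: "p0<p1 \<Longrightarrow> p1<p2 \<Longrightarrow> p2<p3 \<Longrightarrow> p3<p4 \<Longrightarrow> p4<p5 \<Longrightarrow> p5<n \<Longrightarrow>
  {p5,p0,p2} \<in> H \<Longrightarrow> {p1,p3,p4} \<in> H \<Longrightarrow> contains_copy n H 6 M2"
  unfolding copy_iff
  apply (rule exI[of _ p5], rule conjI, simp)
  apply (rule exI[of _ "p5-p5"], rule exI[of _ "p0+n-p5"], rule exI[of _ "p1+n-p5"], rule exI[of _ "p2+n-p5"],
         rule exI[of _ "p3+n-p5"], rule exI[of _ "p4+n-p5"])
  apply (simp add: rt0 rt1 rt2)
  by arith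

lemma pat2x: "p0<p1 \<Longrightarrow> p1<p2 \<Longrightarrow> p2<p3 \<Longrightarrow> p3<p4 \<Longrightarrow> p4<p5 \<Longrightarrow> p5<n \<Longrightarrow>
  {p4,p5,p1} \<in> H \<Longrightarrow> {p0,p2,p3} \<in> H \<Longrightarrow> contains_copy n H 6 M2"
  unfolding copy_iff
  apply (rule exI[of _ p4], rule conjI, simp)
  apply (rule exI[of _ "p4-p4"], rule exI[of _ "p5-p4"], rule exI[of _ "p0+n-p4"], rule exI[of _ "p1+n-p4"],
         rule exI[of _ "p2+n-p4"], rule exI[of _ "p3+n-p4"])
  apply (simp add: rt0 rt1 rt2)
  by arith

lemma pat3x: "p0<p1 \<Longrightarrow> p1<p2 \<Longrightarrow> p2<p3 \<Longrightarrow> p3<p4 \<Longrightarrow> p4<p5 \<Longrightarrow> p5<n \<Longrightarrow>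
  {p3,p4,p0} \<in> H \<Longrightarrow> {p5,p1,p2} \<in> H \<Longrightarrow> contains_copy n H 6 M2"
  unfolding copy_iff
  apply (rule exI[of _ p3], rule conjI, simp)
  apply (rule exI[of _ "p3-p3"], rule exI[of _ "p4-p3"], rule exI[of _ "p5-p3"], rule exI[of _ "p0+n-p3"],
         rule exI[of _ "p1+n-p3"], rule exI[of _ "p2+n-p3"])
  apply (simp add: rt0 rt1 rt2)
  by arith

lemma pat4x: "p0<p1 \<Longrightarrow> p1<p2 \<Longrightarrow> p2<p3 \<Longrightarrow> p3<p4 \<Longrightarrow> p4<p5 \<Longrightarrow> p5<n \<Longrightarrow>
  {p2,p3,p5} \<in> H \<Longrightarrow> {p4,p0,p1} \<in> H \<Longrightarrow> contains_copy n H 6 M2"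
  unfolding copy_iff
  apply (rule exI[of _ p2], rule conjI, simp)
  apply (rule exI[of _ "p2-p2"], rule exI[of _ "p3-p2"], rule exI[of _ "p4-p2"], rule exI[of _ "p5-p2"],
         rule exI[of _ "p0+n-p2"], rule exI[of _ "p1+n-p2"])
  apply (simp add: rt0 rt1 rt2)
  by arith

lemma pat5x: "p0<p1 \<Longrightarrow> p1<p2 \<Longrightarrow> p2<p3 \<Longrightarrow> p3<p4 \<Longrightarrow> p4<p5 \<Longrightarrow> p5<n \<Longrightarrow>
  {p1,p2,p4} \<in> H \<Longrightarrow> {p3,p5,p0} \<in> H \<Longrightarrow> contains_copy n H 6 M2"
  unfolding copy_iff
  apply (rule exI[of _ p1], rule conjI, simp)
  apply (rule exI[of _ "p1-p1"], rule exI[of _ "p2-p1"], rule exI[of _ "p3-p1"], rule exI[of _ "p4-p1"],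
         rule exI[of _ "p5-p1"], rule exI[of _ "p0+n-p1"])
  apply (simp add: rt0 rt1 rt2)
  by arith



lemma sort3: assumes "card (e::nat set) = 3" shows "\<exists>a b c. a<b \<and> b<c \<and> e = {a,b,c}"
proof -
  obtain x y z where e: "e = {x,y,z}" "x\<noteq>y" "y\<noteq>z" "x\<noteq>z" using assms card_3_iff by metis
  consider "x<y" "y<z" | "x<z" "z<y" | "y<x" "x<z" | "y<z" "z<x" | "z<x" "x<y" | "z<y" "y<x"
    using e(2-4) by linarith
  then show ?thesis
  proof cases
    case 1 then show ?thesis using e by blast
  next
    case 2 have "e = {x,z,y}" using e(1) by blast
    then show ?thesis using 2 by blast
  next
    case 3 have "e = {y,x,z}" using e(1) by blast
    then show ?thesis using 3 by blast
  next
    case 4 have "e = {y,z,x}" using e(1) by blast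
    then show ?thesis using 4 by blast
  next
    case 5 have "e = {z,x,y}" using e(1) by blast
    then show ?thesis using 5 by blast
  next
    case 6 have "e = {z,y,x}" using e(1) by blast
    then show ?thesis using 6 by blast
  qed
qed

lemma G_tri: assumes "n \<ge> 7" "x < n" "k = 2 \<or> k = 3" shows "G n k x \<in> triples n"
proof -
  have "G n k x \<subseteq> {0..<n}" unfolding G_def using assms by auto
  moreover have "card (G n k x) = 3"
  proof -
    have m1: "(x+1) mod n = (if x+1 < n then x+1 else x+1-n)" using assms by (intro modn) auto
    have mk: "(x+k) mod n = (if x+k < n then x+k else x+k-n)" using assms by (intro modn) auto
    have "x \<noteq> (x+1) mod n" "x \<noteq> (x+k) mod n" "(x+1) mod n \<noteq> (x+k) mod n"
      unfolding m1 mk using assms(1,2) assms(3) by (simp_all split: if_split; linarith)+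
    then show ?thesis unfolding G_def by simp
  qed
  ultimately show ?thesis unfolding triples_def by simp
qed

definition H2 :: "nat \<Rightarrow> nat set set" where "H2 n = Fam n 2 \<union> Fam n 3"

lemma H2_cgh: "n \<ge> 7 \<Longrightarrow> cgh n (H2 n)"
  unfolding cgh_def H2_def Fam_def using G_tri by auto

lemma H2_lin: assumes "a < b" "b < c" "c < n" "n \<ge> 7"
  shows "{a,b,c} \<in> H2 n \<longleftrightarrow> (b = a+1 \<and> c = a+2) \<or> (a = 0 \<and> b = 1 \<and> c = n-1) \<or> (a = 0 \<and> b = n-2 \<and> c = n-1)
     \<or> (b = a+1 \<and> c = a+3) \<or> (a = 0 \<and> b = 2 \<and> c = n-1)
     \<or> (a = 1 \<and> b = n-2 \<and> c = n-1) \<or> (a = 0 \<and> b = n-3 \<and> c = n-2)"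
  unfolding H2_def using linC[OF assms(1-3)] linT[OF assms(1-3)] assms(4) by auto

lemma H2_unrot: assumes "r < n" "a < n" "b < n" "c < n" "{rt n r a, rt n r b, rt n r c} \<in> H2 n"
  shows "{a,b,c} \<in> H2 n"
  using assms unrot[of r n a b c 2] unrot[of r n a b c 3] unfolding H2_def by auto



lemma H2_free: assumes "n \<ge> 7" shows "\<not> contains_copy n (H2 n) 6 M2"
proof
  assume "contains_copy n (H2 n) 6 M2"
  then obtain r y0 y1 y2 y3 y4 y5 where r: "r < n" and o: "y0<y1" "y1<y2" "y2<y3" "y3<y4" "y4<y5" "y5<n"
    and e: "{rt n r y0, rt n r y1, rt n r y3} \<in> H2 n" "{rt n r y2, rt n r y4, rt n r y5} \<in> H2 n"
    unfolding copy_iff by blast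
  have "{y0,y1,y3} \<in> H2 n" using H2_unrot[OF r _ _ _ e(1)] o by simp
  then have A: "(y1 = y0+1 \<and> y3 = y0+2) \<or> (y0 = 0 \<and> y1 = 1 \<and> y3 = n-1) \<or> (y0 = 0 \<and> y1 = n-2 \<and> y3 = n-1)
     \<or> (y1 = y0+1 \<and> y3 = y0+3) \<or> (y0 = 0 \<and> y1 = 2 \<and> y3 = n-1)
     \<or> (y0 = 1 \<and> y1 = n-2 \<and> y3 = n-1) \<or> (y0 = 0 \<and> y1 = n-3 \<and> y3 = n-2)"
    using H2_lin[of y0 y1 y3 n] o assms by simp
  have "{y2,y4,y5} \<in> H2 n" using H2_unrot[OF r _ _ _ e(2)] o by simp
  then have B: "(y4 = y2+1 \<and> y5 = y2+2) \<or> (y2 = 0 \<and> y4 = 1 \<and> y5 = n-1) \<or> (y2 = 0 \<and> y4 = n-2 \<and> y5 = n-1)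
     \<or> (y4 = y2+1 \<and> y5 = y2+3) \<or> (y2 = 0 \<and> y4 = 2 \<and> y5 = n-1)
     \<or> (y2 = 1 \<and> y4 = n-2 \<and> y5 = n-1) \<or> (y2 = 0 \<and> y4 = n-3 \<and> y5 = n-2)"
    using H2_lin[of y2 y4 y5 n] o assms by simp
  have A': "y1 = y0+1 \<and> y3 = y0+3" using A o by (elim disjE conjE; linarith)
  show False using B A' o by (elim disjE conjE; linarith)
qed

lemma H2_sat_step: assumes "n \<ge> 7" "a < b" "b < c" "c < n" "{a,b,c} \<notin> H2 n"
  shows "contains_copy n (insert {a,b,c} (H2 n)) 6 M2"
proof -
  let ?H = "insert {a,b,c} (H2 n)"
  have T: "\<And>p q s. p<q \<Longrightarrow> q<s \<Longrightarrow> s<n \<Longrightarrow> (q = p+1 \<and> s = p+3) \<or> (p = 0 \<and> q = 2 \<and> s = n-1)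
     \<or> (p = 1 \<and> q = n-2 \<and> s = n-1) \<or> (p = 0 \<and> q = n-3 \<and> s = n-2) \<Longrightarrow> {p,q,s} \<in> ?H"
  proof -
    fix p q s assume h: "p<q" "q<s" "s<n" "(q = p+1 \<and> s = p+3) \<or> (p = 0 \<and> q = 2 \<and> s = n-1)
     \<or> (p = 1 \<and> q = n-2 \<and> s = n-1) \<or> (p = 0 \<and> q = n-3 \<and> s = n-2)"
    have "{p,q,s} \<in> H2 n" using H2_lin[OF h(1-3) assms(1)] h(4) by blast
    then show "{p,q,s} \<in> ?H" by simp
  qed
  have nl: "\<not> ((b = a+1 \<and> c = a+2) \<or> (a = 0 \<and> b = 1 \<and> c = n-1) \<or> (a = 0 \<and> b = n-2 \<and> c = n-1)
     \<or> (b = a+1 \<and> c = a+3) \<or> (a = 0 \<and> b = 2 \<and> c = n-1)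
     \<or> (a = 1 \<and> b = n-2 \<and> c = n-1) \<or> (a = 0 \<and> b = n-3 \<and> c = n-2))"
    using H2_lin[OF assms(2-4,1)] assms(5) by simp
  have Ti: "{a,b,c} \<in> ?H" by simp
  have TA: "\<And>p. p+3 < n \<Longrightarrow> {p,p+1,p+3} \<in> ?H"
  proof -
    fix p assume "p+3 < n"
    then have "{p,p+1,p+3} \<in> H2 n" using H2_lin[of p "p+1" "p+3" n] assms(1) by simp
    then show "{p,p+1,p+3} \<in> ?H" by simp
  qed
  have TB: "{0,2,n-1} \<in> ?H" using H2_lin[of 0 2 "n-1" n] assms(1) by simp
  have TC: "{1,n-2,n-1} \<in> ?H" using H2_lin[of 1 "n-2" "n-1" n] assms(1) by simp
  have TD: "{0,n-3,n-2} \<in> ?H" using H2_lin[of 0 "n-3" "n-2" n] assms(1) by simp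
  have W: "(a+2<b \<and> b+1<c) \<or> (b+2<c \<and> c+1<n) \<or> (b+2<c \<and> c = n-1 \<and> a\<ge>1) \<or> (a\<ge>2 \<and> a+1<b)
    \<or> (a=1 \<and> c<n-1 \<and> 2<b) \<or> (a=0 \<and> c<n-2 \<and> 1<b)"
  proof (rule ccontr)
    assume nW: "\<not> ?thesis"
    have nW': "\<not>(a+2<b \<and> b+1<c)" "\<not>(b+2<c \<and> c+1<n)" "\<not>(b+2<c \<and> c = n-1 \<and> a\<ge>1)" "\<not>(a\<ge>2 \<and> a+1<b)"
    "\<not>(a=1 \<and> c<n-1 \<and> 2<b)" "\<not>(a=0 \<and> c<n-2 \<and> 1<b)" using nW by blast+
    have N1: "a+2\<ge>b \<or> b+1\<ge>c" using nW'(1) by auto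
    have N2: "b+2\<ge>c \<or> c+1\<ge>n" using nW'(2) by auto
    have N3: "b+2\<ge>c \<or> c \<noteq> n-1 \<or> a = 0" using nW'(3) by auto
    have N4: "a<2 \<or> a+1\<ge>b" using nW'(4) by auto
    have N5: "a\<noteq>1 \<or> c\<ge>n-1 \<or> b\<le>2" using nW'(5) by auto
    have N6: "a\<noteq>0 \<or> c\<ge>n-2 \<or> b\<le>1" using nW'(6) by auto
    consider "b = a+1" | "b \<ge> a+2" using assms(2) by linarith
    then show False
    proof cases
      case 1
      consider "c = a+2" | "c = a+3" | "c \<ge> a+4" using assms(3) 1 by linarith
      then show False
      proof cases
        case 1 then show False using nl \<open>b = a+1\<close> by simp
      next
        case 2 then show False using nl \<open>b = a+1\<close> by simp
      next
        case 3
        have "c = n-1" using N2 3 \<open>b = a+1\<close> assms(4) by linarith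
        moreover have "a = 0" using N3 3 \<open>b = a+1\<close> \<open>c = n-1\<close> by linarith
        ultimately show False using nl \<open>b = a+1\<close> by simp
      qed
    next
      case 2
      have "a < 2" using N4 2 by linarith
      then consider "a = 0" | "a = 1" by linarith
      then show False
      proof cases
        case 1
        have c2: "c \<ge> n-2" using N6 1 2 by linarith
        consider "b = 2" | "c = b+1" using N1 1 2 assms(3) by linarith
        then show False
        proof cases
          case 1
          then consider "c = n-1" | "c = n-2" using c2 assms(4) by linarith
          then show False
          proof cases
            case 1 then show False using nl \<open>a = 0\<close> \<open>b = 2\<close> by simp
          next
            case 2 then show False using N2 \<open>b = 2\<close> assms(1) by linarith
          qed
        next
          case 2
          then consider "c = n-1" | "c = n-2" using c2 assms(4) by linarith
          then show False
          proof cases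
            case 1 then have "b = n-2" using \<open>c = b+1\<close> by linarith
            then show False using nl \<open>a = 0\<close> \<open>c = n-1\<close> by simp
          next
            case 2 then have "b = n-3" using \<open>c = b+1\<close> by linarith
            then show False using nl \<open>a = 0\<close> \<open>c = n-2\<close> by simp
          qed
        qed
      next
        case 2
        have "c = n-1" using N5 2 \<open>b \<ge> a+2\<close> assms(4) by linarith
        consider "b = 3" | "c = b+1" using N1 2 \<open>b \<ge> a+2\<close> assms(3) by linarith
        then show False
        proof cases
          case 1 then show False using N2 N3 \<open>c = n-1\<close> \<open>a = 1\<close> assms(1) by linarith
        next
          case 2 then have "b = n-2" using \<open>c = n-1\<close> by linarith
          then show False using nl \<open>a = 1\<close> \<open>c = n-1\<close> by simp
        qed
      qed
    qed
  qed
  then consider "a+2<b \<and> b+1<c" | "b+2<c \<and> c+1<n" | "b+2<c \<and> c = n-1 \<and> a\<ge>1" | "a\<ge>2 \<and> a+1<b"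
    | "a=1 \<and> c<n-1 \<and> 2<b" | "a=0 \<and> c<n-2 \<and> 1<b" by blast
  then show ?thesis
  proof cases
    case 1
    have e: "b-2+1 = b-1" "b-2+3 = b+1" "b-2+3 < n" using 1 assms by linarith+
    have "{b-2, b-2+1, b-2+3} \<in> ?H" by (rule TA) (use e in linarith)
    then have hA: "{b-2,b-1,b+1} \<in> ?H" by (simp only: e)
    have "{b,c,a} = {a,b,c}" by blast
    then have hB: "{b,c,a} \<in> ?H" using Ti by (simp only:)
    show ?thesis by (rule pat5x[of a "b-2" "b-1" b "b+1" c n ?H, OF _ _ _ _ _ _ hA hB]) (use 1 assms in linarith)+
  next
    case 2
    have e: "c-2+1 = c-1" "c-2+3 = c+1" "c-2+3 < n" using 2 assms by linarith+
    have "{c-2, c-2+1, c-2+3} \<in> ?H" by (rule TA) (use e in linarith)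
    then have hA: "{c-2,c-1,c+1} \<in> ?H" by (simp only: e)
    have "{c,a,b} = {a,b,c}" by blast
    then have hB: "{c,a,b} \<in> ?H" using Ti by (simp only:)
    show ?thesis by (rule pat4x[of a b "c-2" "c-1" c "c+1" n ?H, OF _ _ _ _ _ _ hA hB]) (use 2 assms in linarith)+
  next
    case 3
    have "{n-3,n-2,0} = {0,n-3,n-2}" by blast
    then have hA: "{n-3,n-2,0} \<in> ?H" using TD by (simp only:)
    have "{n-1,a,b} = {a,b,c}" using 3 by blast
    then have hB: "{n-1,a,b} \<in> ?H" using Ti by (simp only:)
    show ?thesis by (rule pat3x[of 0 a b "n-3" "n-2" "n-1" n ?H, OF _ _ _ _ _ _ hA hB]) (use 3 assms in linarith)+
  next
    case 4
    have e: "a-2+1 = a-1" "a-2+3 = a+1" "a-2+3 < n" using 4 assms by linarith+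
    have "{a-2, a-2+1, a-2+3} \<in> ?H" by (rule TA) (use e in linarith)
    then have hA: "{a-2,a-1,a+1} \<in> ?H" by (simp only: e)
    have "{a,b,c} = {a,b,c}" by blast
    then have hB: "{a,b,c} \<in> ?H" using Ti by (simp only:)
    show ?thesis by (rule pat0[of "a-2" "a-1" a "a+1" b c n ?H, OF _ _ _ _ _ _ hA hB]) (use 4 assms in linarith)+
  next
    case 5
    have "{n-1,0,2} = {0,2,n-1}" by blast
    then have hA: "{n-1,0,2} \<in> ?H" using TB by (simp only:)
    have "{1,b,c} = {a,b,c}" using 5 by blast
    then have hB: "{1,b,c} \<in> ?H" using Ti by (simp only:)
    show ?thesis by (rule pat1x[of 0 1 2 b c "n-1" n ?H, OF _ _ _ _ _ _ hA hB]) (use 5 assms in linarith)+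
  next
    case 6
    have "{n-2,n-1,1} = {1,n-2,n-1}" by blast
    then have hA: "{n-2,n-1,1} \<in> ?H" using TC by (simp only:)
    have "{0,b,c} = {a,b,c}" using 6 by blast
    then have hB: "{0,b,c} \<in> ?H" using Ti by (simp only:)
    show ?thesis by (rule pat2x[of 0 1 b c "n-2" "n-1" n ?H, OF _ _ _ _ _ _ hA hB]) (use 6 assms in linarith)+
  qed
qed

lemma H2_sat: assumes "n \<ge> 7" shows "saturated n 6 M2 (H2 n)"
  unfolding saturated_def
proof (intro conjI ballI)
  show "cgh n (H2 n)" using H2_cgh assms .
  show "\<not> contains_copy n (H2 n) 6 M2" using H2_free assms .
  fix e assume "e \<in> triples n - H2 n"
  then have "card e = 3" "e \<subseteq> {0..<n}" "e \<notin> H2 n" unfolding triples_def by auto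
  obtain a b c where abc: "a<b" "b<c" "e = {a,b,c}" using sort3[OF \<open>card e = 3\<close>] by blast
  have "c < n" using abc(3) \<open>e \<subseteq> {0..<n}\<close> by auto
  then show "contains_copy n (insert e (H2 n)) 6 M2" using H2_sat_step[of n a b c] assms abc \<open>e \<notin> H2 n\<close> by simp
qed

lemma H2_card: "card (H2 n) \<le> 2 * n"
proof -
  have "card (H2 n) \<le> card (Fam n 2) + card (Fam n 3)" unfolding H2_def by (rule card_Un_le)
  also have "\<dots> \<le> n + n" unfolding Fam_def using card_image_le[of "{0..<n}"] by (intro add_mono) auto
  finally show ?thesis by simp
qed



lemma modc: "z < n \<Longrightarrow> j < n \<Longrightarrow> w = (z + j) mod n \<Longrightarrow> (w = z + j \<and> z + j < n) \<or> (w + n = z + j)"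
  for z j n w :: nat
  by (cases "z + j < n") (simp_all add: le_mod_geq)

lemma G_inj: assumes "n \<ge> 7" "x < n" "u < n" "k = 2 \<or> k = 3" "G n k x = G n k u" shows "x = u"
proof (rule ccontr)
  assume ne: "x \<noteq> u"
  have k: "k < n" "1 < n" "k \<le> 3" "k \<ge> 2" using assms(1,4) by auto
  have "x \<in> G n k u" "u \<in> G n k x" using assms(5) unfolding G_def by auto
  then have d1: "x = (u+1) mod n \<or> x = (u+k) mod n" and d2: "u = (x+1) mod n \<or> u = (x+k) mod n"
    using ne unfolding G_def by auto
  have X: "(x = u + j \<and> u + j < n) \<or> x + n = u + j" if "x = (u + j) mod n" "j < n" for j
    using modc[OF assms(3) that(2) that(1)] .
  have U: "(u = x + j \<and> x + j < n) \<or> u + n = x + j" if "u = (x + j) mod n" "j < n" for j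
    using modc[OF assms(2) that(2) that(1)] .
  from d1 obtain j where j: "j = 1 \<or> j = k" "x = (u + j) mod n" by blast
  from d2 obtain j' where j': "j' = 1 \<or> j' = k" "u = (x + j') mod n" by blast
  have "j < n" "j' < n" using j(1) j'(1) k by auto
  then have "(x = u + j \<and> u + j < n) \<or> x + n = u + j" "(u = x + j' \<and> x + j' < n) \<or> u + n = x + j'"
    using X[OF j(2)] U[OF j'(2)] by auto
  then show False using j(1) j'(1) k assms(1) by (elim disjE conjE; linarith)
qed

lemma G3_notcons: assumes "n \<ge> 7" "x < n" shows "G n 3 x \<notin> Fam n 2"
proof
  assume h: "G n 3 x \<in> Fam n 2"
  have tr: "G n 3 x \<in> triples n" using G_tri assms by auto
  have "card (G n 3 x) = 3" using tr unfolding triples_def by simp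
  then obtain a b c where abc: "a<b" "b<c" "G n 3 x = {a,b,c}" using sort3 by blast
  have "c < n" using tr abc(3) unfolding triples_def by auto
  have "{a,b,c} \<in> Fam n 3" unfolding Fam_def using abc(3) assms(2) by (intro image_eqI[of _ _ x]) auto
  then have L3: "(b = a+1 \<and> c = a+3) \<or> (a = 0 \<and> b = 2 \<and> c = n-1)
     \<or> (a = 1 \<and> b = n-2 \<and> c = n-1) \<or> (a = 0 \<and> b = n-3 \<and> c = n-2)"
    using linT[of a b c n] abc \<open>c < n\<close> assms(1) by simp
  have L2: "(b = a+1 \<and> c = a+2) \<or> (a = 0 \<and> b = 1 \<and> c = n-1) \<or> (a = 0 \<and> b = n-2 \<and> c = n-1)"
    using linC[of a b c n] abc \<open>c < n\<close> h by simp
  show False using L2 L3 assms(1) by (elim disjE conjE; linarith)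
qed

lemma sat_free: "saturated n 6 M2 H \<Longrightarrow> \<not> contains_copy n H 6 M2" unfolding saturated_def by blast

lemma sat_use:
  assumes sat: "saturated n 6 M2 H" and C: "C \<in> triples n" "C \<notin> H"
  obtains r y0 y1 y2 y3 y4 y5 where "r < n" "y0<y1" "y1<y2" "y2<y3" "y3<y4" "y4<y5" "y5<n"
    "{rt n r y0, rt n r y1, rt n r y3} \<in> insert C H" "{rt n r y2, rt n r y4, rt n r y5} \<in> insert C H"
    "{rt n r y0, rt n r y1, rt n r y3} = C \<or> {rt n r y2, rt n r y4, rt n r y5} = C"
proof -
  have "contains_copy n (insert C H) 6 M2" using sat C unfolding saturated_def by blast
  then obtain r y0 y1 y2 y3 y4 y5 where h: "r < n" "y0<y1" "y1<y2" "y2<y3" "y3<y4" "y4<y5" "y5<n"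
    "{rt n r y0, rt n r y1, rt n r y3} \<in> insert C H" "{rt n r y2, rt n r y4, rt n r y5} \<in> insert C H"
    unfolding copy_iff by blast
  have "\<not> ({rt n r y0, rt n r y1, rt n r y3} \<in> H \<and> {rt n r y2, rt n r y4, rt n r y5} \<in> H)"
  proof
    assume "{rt n r y0, rt n r y1, rt n r y3} \<in> H \<and> {rt n r y2, rt n r y4, rt n r y5} \<in> H"
    then have "contains_copy n H 6 M2" unfolding copy_iff using h(1-7) by blast
    then show False using sat_free[OF sat] by blast
  qed
  then have "{rt n r y0, rt n r y1, rt n r y3} = C \<or> {rt n r y2, rt n r y4, rt n r y5} = C" using h(8,9) by blast
  then show ?thesis using that h by blast
qed

lemma cons_in: assumes sat: "saturated n 6 M2 H" and n: "n \<ge> 7" and x: "x < n" shows "G n 2 x \<in> H"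
proof (rule ccontr)
  assume nH: "G n 2 x \<notin> H"
  have Ct: "G n 2 x \<in> triples n" using G_tri n x by auto
  have CF: "G n 2 x \<in> Fam n 2" using x unfolding Fam_def by auto
  obtain r y0 y1 y2 y3 y4 y5 where h: "r < n" "y0<y1" "y1<y2" "y2<y3" "y3<y4" "y4<y5" "y5<n"
    "{rt n r y0, rt n r y1, rt n r y3} = G n 2 x \<or> {rt n r y2, rt n r y4, rt n r y5} = G n 2 x"
    using sat_use[OF sat Ct nH] by metis
  from h(8) show False
  proof
    assume "{rt n r y0, rt n r y1, rt n r y3} = G n 2 x"
    then have "{y0,y1,y3} \<in> Fam n 2" using unrot[of r n y0 y1 y3 2] CF h(1-7) by simp
    then have "(y1 = y0+1 \<and> y3 = y0+2) \<or> (y0 = 0 \<and> y1 = 1 \<and> y3 = n-1) \<or> (y0 = 0 \<and> y1 = n-2 \<and> y3 = n-1)"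
      using linC[of y0 y1 y3 n] h(2-7) by simp
    then show False using h(2-7) by (elim disjE conjE; linarith)
  next
    assume "{rt n r y2, rt n r y4, rt n r y5} = G n 2 x"
    then have "{y2,y4,y5} \<in> Fam n 2" using unrot[of r n y2 y4 y5 2] CF h(1-7) by simp
    then have "(y4 = y2+1 \<and> y5 = y2+2) \<or> (y2 = 0 \<and> y4 = 1 \<and> y5 = n-1) \<or> (y2 = 0 \<and> y4 = n-2 \<and> y5 = n-1)"
      using linC[of y2 y4 y5 n] h(2-7) by simp
    then show False using h(2-7) by (elim disjE conjE; linarith)
  qed
qed

lemma T_wit: assumes sat: "saturated n 6 M2 H" and n: "n \<ge> 7" and x: "x < n" and nH: "G n 3 x \<notin> H"
  shows "\<exists>f\<in>H. f \<notin> Fam n 2 \<and> (x+2) mod n \<in> f"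
proof -
  have Ct: "G n 3 x \<in> triples n" using G_tri n x by auto
  have CF: "G n 3 x \<in> Fam n 3" using x unfolding Fam_def by auto
  obtain r y0 y1 y2 y3 y4 y5 where h: "r < n" "y0<y1" "y1<y2" "y2<y3" "y3<y4" "y4<y5" "y5<n"
    "{rt n r y0, rt n r y1, rt n r y3} \<in> insert (G n 3 x) H" "{rt n r y2, rt n r y4, rt n r y5} \<in> insert (G n 3 x) H"
    "{rt n r y0, rt n r y1, rt n r y3} = G n 3 x \<or> {rt n r y2, rt n r y4, rt n r y5} = G n 3 x"
    using sat_use[OF sat Ct nH] by metis
  have nB: "{rt n r y2, rt n r y4, rt n r y5} \<noteq> G n 3 x"
  proof
    assume "{rt n r y2, rt n r y4, rt n r y5} = G n 3 x"
    then have "{y2,y4,y5} \<in> Fam n 3" using unrot[of r n y2 y4 y5 3] CF h(1-7) by simp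
    then have "(y4 = y2+1 \<and> y5 = y2+3) \<or> (y2 = 0 \<and> y4 = 2 \<and> y5 = n-1)
     \<or> (y2 = 1 \<and> y4 = n-2 \<and> y5 = n-1) \<or> (y2 = 0 \<and> y4 = n-3 \<and> y5 = n-2)"
      using linT[of y2 y4 y5 n] h(2-7) n by simp
    then show False using h(2-7) by (elim disjE conjE; linarith)
  qed
  then have A: "{rt n r y0, rt n r y1, rt n r y3} = G n 3 x" using h(10) by blast
  have BH: "{rt n r y2, rt n r y4, rt n r y5} \<in> H" using h(9) nB by blast
  have "{y0,y1,y3} \<in> Fam n 3" using unrot[of r n y0 y1 y3 3] A CF h(1-7) by simp
  then have "(y1 = y0+1 \<and> y3 = y0+3) \<or> (y0 = 0 \<and> y1 = 2 \<and> y3 = n-1)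
     \<or> (y0 = 1 \<and> y1 = n-2 \<and> y3 = n-1) \<or> (y0 = 0 \<and> y1 = n-3 \<and> y3 = n-2)"
    using linT[of y0 y1 y3 n] h(2-7) n by simp
  then have y: "y1 = y0+1" "y3 = y0+3" using h(2-7) by (elim disjE conjE; linarith)+
  then have y2: "y2 = y0+2" using h(2-4) by linarith
  define u where "u = rt n r y0"
  have un: "u < n" unfolding u_def rt_def using h(1) by simp
  have sh: "rt n r (y0 + j) = (u + j) mod n" for j unfolding u_def rt_def by (simp add: add_ac mod_add_right_eq)
  have "G n 3 u = G n 3 x" using A unfolding G_def y sh[of 1, symmetric] sh[of 3, symmetric]
    by (simp add: u_def)
  then have "u = x" using G_inj[of n u x 3] n un x by simp
  then have "rt n r y2 = (x+2) mod n" using sh[of 2] y2 by simp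
  moreover have "{rt n r y2, rt n r y4, rt n r y5} \<notin> Fam n 2"
  proof
    assume "{rt n r y2, rt n r y4, rt n r y5} \<in> Fam n 2"
    then have "{y2,y4,y5} \<in> Fam n 2" using unrot[of r n y2 y4 y5 2] h(1-7) by simp
    then have "(y4 = y2+1 \<and> y5 = y2+2) \<or> (y2 = 0 \<and> y4 = 1 \<and> y5 = n-1) \<or> (y2 = 0 \<and> y4 = n-2 \<and> y5 = n-1)"
      using linC[of y2 y4 y5 n] h(2-7) by simp
    then show False using h(2-7) by (elim disjE conjE; linarith)
  qed
  ultimately show ?thesis using BH by (intro bexI[of _ "{rt n r y2, rt n r y4, rt n r y5}"]) auto
qed



lemma fin_triples: "finite (triples n)"
proof -
  have "triples n \<subseteq> Pow {0..<n}" unfolding triples_def by auto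
  then show ?thesis by (rule finite_subset) simp
qed

lemma lower: assumes sat: "saturated n 6 M2 H" and n: "n \<ge> 7" shows "5 * n \<le> 4 * card H"
proof -
  have Ht: "H \<subseteq> triples n" using sat unfolding saturated_def cgh_def by blast
  have fin: "finite H" using finite_subset[OF Ht fin_triples] .
  have csub: "Fam n 2 \<subseteq> H" unfolding Fam_def using cons_in[OF sat n] by auto
  have injC: "inj_on (G n 2) {0..<n}" unfolding inj_on_def using G_inj[of n _ _ 2] n by auto
  have cardC: "card (Fam n 2) = n" unfolding Fam_def using card_image[OF injC] by simp
  define E where "E = H - Fam n 2"
  have finE: "finite E" unfolding E_def using fin by simp
  define w where "w x = (if G n 3 x \<in> H then G n 3 x else (SOME f. f \<in> H \<and> f \<notin> Fam n 2 \<and> (x+2) mod n \<in> f))" for x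
  have wp: "w x \<in> E \<and> (w x = G n 3 x \<or> (x+2) mod n \<in> w x)" if "x < n" for x
  proof (cases "G n 3 x \<in> H")
    case True
    then show ?thesis unfolding w_def E_def using G3_notcons[OF n that] by simp
  next
    case False
    have "\<exists>f. f \<in> H \<and> f \<notin> Fam n 2 \<and> (x+2) mod n \<in> f" using T_wit[OF sat n that False] by blast
    then have P: "(SOME f. f \<in> H \<and> f \<notin> Fam n 2 \<and> (x+2) mod n \<in> f) \<in> H \<and>
       (SOME f. f \<in> H \<and> f \<notin> Fam n 2 \<and> (x+2) mod n \<in> f) \<notin> Fam n 2 \<and>
       (x+2) mod n \<in> (SOME f. f \<in> H \<and> f \<notin> Fam n 2 \<and> (x+2) mod n \<in> f)" by (rule someI_ex)
    have wx: "w x = (SOME f. f \<in> H \<and> f \<notin> Fam n 2 \<and> (x+2) mod n \<in> f)" unfolding w_def using False by (simp only: if_False)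
    have "w x \<in> H \<and> w x \<notin> Fam n 2 \<and> (x+2) mod n \<in> w x" unfolding wx by (rule P)
    then show ?thesis unfolding E_def by simp
  qed
  have inj2: "inj_on (\<lambda>x. (x+2) mod n) {0..<n}"
  proof (rule inj_onI)
    fix x y assume xy: "x \<in> {0..<n}" "y \<in> {0..<n}" "(x+2) mod n = (y+2) mod n"
    have t: "2 < n" using n by simp
    have "((x+2) mod n = x + 2 \<and> x + 2 < n) \<or> (x+2) mod n + n = x + 2" using modc[of x n 2 "(x+2) mod n"] xy t by simp
    moreover have "((y+2) mod n = y + 2 \<and> y + 2 < n) \<or> (y+2) mod n + n = y + 2" using modc[of y n 2 "(y+2) mod n"] xy t by simp
    moreover have "x < n" "y < n" using xy by auto
    ultimately show "x = y" using xy(3) by (elim disjE conjE; linarith)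
  qed
  have each: "card {x\<in>{0..<n}. w x = f} \<le> 4" if "f \<in> E" for f
  proof -
    have f3a: "card f = 3" using that Ht unfolding E_def triples_def by auto
    have f3: "card f = 3" "finite f" using f3a by (auto intro: card_ge_0_finite)
    let ?P = "{x\<in>{0..<n}. (x+2) mod n \<in> f}" and ?Q = "{x\<in>{0..<n}. G n 3 x = f}"
    have sub: "{x\<in>{0..<n}. w x = f} \<subseteq> ?P \<union> ?Q" using wp by auto
    have "card ?P \<le> card f"
      by (rule card_inj_on_le[OF inj_on_subset[OF inj2]]) (auto simp: f3)
    moreover have "card ?Q \<le> 1"
    proof -
      have "\<forall>a\<in>?Q. \<forall>b\<in>?Q. a = b" using G_inj[of n _ _ 3] n by auto
      then show ?thesis using card_le_Suc0_iff_eq[of ?Q] by simp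
    qed
    moreover have "card {x\<in>{0..<n}. w x = f} \<le> card (?P \<union> ?Q)" by (rule card_mono[OF _ sub]) simp
    moreover have "card (?P \<union> ?Q) \<le> card ?P + card ?Q" by (rule card_Un_le)
    ultimately show ?thesis using f3 by linarith
  qed
  have cover: "{0..<n} \<subseteq> (\<Union>f\<in>E. {x\<in>{0..<n}. w x = f})" using wp by auto
  have "n = card {0..<n::nat}" by simp
  also have "\<dots> \<le> card (\<Union>f\<in>E. {x\<in>{0..<n}. w x = f})" by (rule card_mono[OF _ cover]) (simp add: finE)
  also have "\<dots> \<le> (\<Sum>f\<in>E. card {x\<in>{0..<n}. w x = f})" by (rule card_UN_le[OF finE])
  also have "\<dots> \<le> (\<Sum>f\<in>E. 4)" by (rule sum_mono) (use each in auto)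
  also have "\<dots> = 4 * card E" by simp
  finally have nE: "n \<le> 4 * card E" .
  have "card E = card H - card (Fam n 2)" unfolding E_def by (rule card_Diff_subset[OF finite_subset[OF csub fin] csub])
  moreover have "card (Fam n 2) \<le> card H" by (rule card_mono[OF fin csub])
  ultimately have "card H = n + card E" using cardC by simp
  then show ?thesis using nE by simp
qed

lemma o_ev0: "(\<lambda>n::nat. if n < 8 then (c n::real) else 0) \<in> o(\<lambda>n. real n)"
proof -
  have "eventually (\<lambda>n. (if n < 8 then (c n::real) else 0) = 0) at_top"
    by (rule eventually_at_top_linorderI[of 8]) simp
  then show ?thesis using landau_o.small.in_cong[of "\<lambda>n::nat. if n < 8 then (c n::real) else 0" "\<lambda>_. 0" at_top]
    by simp
qed

lemma big_n: assumes n: "n \<ge> 7"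
  shows "11 * real n / 9 \<le> real (sat_cyc n 6 M2) \<and> real (sat_cyc n 6 M2) \<le> 3 * real n"
proof -
  let ?S = "{H. saturated n 6 M2 H}"
  have H2S: "H2 n \<in> ?S" using H2_sat[OF n] by simp
  have "?S \<subseteq> Pow (triples n)" unfolding saturated_def cgh_def by auto
  then have finS: "finite ?S" using fin_triples by (rule finite_subset[OF _ finite_Pow_iff[THEN iffD2]])
  have ne: "card ` ?S \<noteq> {}" using H2S by blast
  have "sat_cyc n 6 M2 \<in> card ` ?S" unfolding sat_cyc_def using Min_in[OF finite_imageI[OF finS] ne] .
  then obtain H where H: "saturated n 6 M2 H" "sat_cyc n 6 M2 = card H" by auto
  have "5 * n \<le> 4 * sat_cyc n 6 M2" using lower[OF H(1) n] H(2) by simp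
  then have l: "11 * real n / 9 \<le> real (sat_cyc n 6 M2)" by linarith
  have "sat_cyc n 6 M2 \<le> card (H2 n)" unfolding sat_cyc_def using Min_le[OF finite_imageI[OF finS]] H2S by blast
  then have "sat_cyc n 6 M2 \<le> 2 * n" using H2_card[of n] by linarith
  then have "real (sat_cyc n 6 M2) \<le> 3 * real n" by linarith
  then show ?thesis using l by simp
qed

theorem propositionA5:
  shows "\<exists>f g. f \<in> o(\<lambda>n. real n) \<and> g \<in> o(\<lambda>n. real n) \<and>
     (\<forall>n. 11 * real n / 9 + f n \<le> real (sat_cyc n 6 M2) \<and>
          real (sat_cyc n 6 M2) \<le> 3 * real n + g n)"
proof (intro exI conjI allI)
  show "(\<lambda>n::nat. if n < 8 then (-10::real) else 0) \<in> o(\<lambda>n. real n)" by (rule o_ev0)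
  show "(\<lambda>n::nat. if n < 8 then real (sat_cyc n 6 M2) else 0) \<in> o(\<lambda>n. real n)" by (rule o_ev0)
  fix n :: nat
  show "11 * real n / 9 + (if n < 8 then (-10::real) else 0) \<le> real (sat_cyc n 6 M2)"
  proof (cases "n < 8")
    case True then have "real n \<le> 7" by simp
    then show ?thesis using True by simp
  next
    case False then show ?thesis using big_n[of n] by simp
  qed
  show "real (sat_cyc n 6 M2) \<le> 3 * real n + (if n < 8 then real (sat_cyc n 6 M2) else 0)"
  proof (cases "n < 8")
    case True then show ?thesis by simp
  next
    case False then show ?thesis using big_n[of n] by simp
  qed
qed


end
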